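(* A homeomorphism $f$ of a compact metric space $X$ has the two-sided limit shadowing property if and only if both $f$ and $f^{-1}$ have the limit shadowing property and $W^u(x)\cap W^s(y)\ne\emptyset$ for all $x,y\in X$.
   Context: $W^s(x)=\{y: d(f^n(x),f^n(y))\to0\ (n\to+\infty)\}$, $W^u(x)=\{y: d(f^{-n}(x),f^{-n}(y))\to0\ (n\to+\infty)\}$. A homeomorphism $g$ has the limit shadowing property if for every $(x_k)_{k\in\mathbb{N}}$ with $d(g(x_k),x_{k+1})\to0$ as $k\to\infty$ there is $y$ with $d(g^k(y),x_k)\to0$ as $k\to\infty$. $f$ has the two-sided limit shadowing property if for every $(x_k)_{k\in\mathbb{Z}}$ with $d(f(x_k),x_{k+1})\to0$ as $|k|\to\infty$ there is $y$ with $d(f^k(y),x_k)\to0$ as $|k|\to\infty$. *)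

theory Defs
  imports "HOL-Analysis.Analysis"
begin

definition zpow_iter :: "('a \<Rightarrow> 'a) \<Rightarrow> ('a \<Rightarrow> 'a) \<Rightarrow> int \<Rightarrow> 'a \<Rightarrow> 'a" where
  "zpow_iter f g k = (if k \<ge> 0 then f ^^ nat k else g ^^ nat (- k))"

definition stable_set :: "'a::metric_space set \<Rightarrow> ('a \<Rightarrow> 'a) \<Rightarrow> 'a \<Rightarrow> 'a set" where
  "stable_set X f x = {y \<in> X. (\<lambda>n. dist ((f ^^ n) x) ((f ^^ n) y)) \<longlonglongrightarrow> 0}"

definition unstable_set :: "'a::metric_space set \<Rightarrow> ('a \<Rightarrow> 'a) \<Rightarrow> 'a \<Rightarrow> 'a set" where
  "unstable_set X g x = {y \<in> X. (\<lambda>n. dist ((g ^^ n) x) ((g ^^ n) y)) \<longlonglongrightarrow> 0}"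

definition limit_shadowing :: "'a::metric_space set \<Rightarrow> ('a \<Rightarrow> 'a) \<Rightarrow> bool" where
  "limit_shadowing X g \<longleftrightarrow>
     (\<forall>x::nat \<Rightarrow> 'a. range x \<subseteq> X \<longrightarrow>
        (\<lambda>k. dist (g (x k)) (x (Suc k))) \<longlonglongrightarrow> 0 \<longrightarrow>
        (\<exists>y\<in>X. (\<lambda>k. dist ((g ^^ k) y) (x k)) \<longlonglongrightarrow> 0))"

definition two_sided_limit_shadowing :: "'a::metric_space set \<Rightarrow> ('a \<Rightarrow> 'a) \<Rightarrow> ('a \<Rightarrow> 'a) \<Rightarrow> bool" where
  "two_sided_limit_shadowing X f g \<longleftrightarrow>
     (\<forall>x::int \<Rightarrow> 'a. range x \<subseteq> X \<longrightarrow>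
        ((\<lambda>k. dist (f (x k)) (x (k + 1))) \<longlongrightarrow> 0) at_top \<longrightarrow>
        ((\<lambda>k. dist (f (x k)) (x (k + 1))) \<longlongrightarrow> 0) at_bot \<longrightarrow>
        (\<exists>y\<in>X. ((\<lambda>k. dist (zpow_iter f g k y) (x k)) \<longlongrightarrow> 0) at_top \<and>
               ((\<lambda>k. dist (zpow_iter f g k y) (x k)) \<longlongrightarrow> 0) at_bot))"

end

theory Submission
  imports Defs
begin

lemma L_top: fixes h :: "int \<Rightarrow> real"
  shows "(h \<longlongrightarrow> l) at_top \<longleftrightarrow> ((\<lambda>n. h (int n)) \<longlonglongrightarrow> l)"
  using filterlim_compose[OF _ filterlim_int_sequentially] filterlim_int_of_nat_at_topD by blast

lemma L_bot: fixes h :: "int \<Rightarrow> real"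
  shows "(h \<longlongrightarrow> l) at_bot \<longleftrightarrow> ((\<lambda>n. h (- int n)) \<longlonglongrightarrow> l)"
proof -
  have "(h \<longlongrightarrow> l) at_bot \<longleftrightarrow> ((\<lambda>k. h (-k)) \<longlongrightarrow> l) at_top"
    unfolding filterlim_def at_bot_mirror[where 'a=int] filtermap_filtermap ..
  then show ?thesis using L_top[of "\<lambda>k. h (-k)"] by simp
qed

lemma nat_int_p1: "nat (int n + 1) = Suc n" by arith
lemma nat_int_p2: "nat (int n + 2) = Suc (Suc n)" by arith

lemma zp_pos[simp]: "zpow_iter f g (int n) = f^^n" by (simp add: zpow_iter_def)
lemma zp_neg[simp]: "zpow_iter f g (- int n) = g^^n" by (cases "n=0") (auto simp add: zpow_iter_def)

lemma dist_tri_tendsto: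
  assumes "((\<lambda>n. dist (a n) (b n)) \<longlongrightarrow> 0) F" "((\<lambda>n. dist (b n) (c n)) \<longlongrightarrow> 0) F"
  shows "((\<lambda>n. dist (a n) (c n)) \<longlongrightarrow> 0) F"
proof (rule tendsto_sandwich[of "\<lambda>_. 0" _ F "\<lambda>n. dist (a n) (b n) + dist (b n) (c n)"])
  show "((\<lambda>n. dist (a n) (b n) + dist (b n) (c n)) \<longlongrightarrow> 0) F"
    using tendsto_add[OF assms] by simp
qed (auto intro!: always_eventually dist_triangle)

lemma iter_in: "x \<in> X \<Longrightarrow> (\<And>y. y \<in> X \<Longrightarrow> h y \<in> X) \<Longrightarrow> (h ^^ n) x \<in> X"
  by (induction n) auto

lemma dist_sym_tendsto: "((\<lambda>n. dist (a n) (b n)) \<longlongrightarrow> 0) F \<Longrightarrow> ((\<lambda>n. dist (b n) (a n)) \<longlongrightarrow> 0) F"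
  by (simp add: dist_commute)

theorem mainTheorem9:
  fixes X :: "'a::metric_space set" and f g :: "'a \<Rightarrow> 'a"
  assumes "compact X" and "homeomorphism X X f g"
  shows "two_sided_limit_shadowing X f g \<longleftrightarrow>
         (limit_shadowing X f \<and> limit_shadowing X g \<and>
          (\<forall>x\<in>X. \<forall>y\<in>X. unstable_set X g x \<inter> stable_set X f y \<noteq> {}))"
proof -
  have fX: "\<And>x. x \<in> X \<Longrightarrow> f x \<in> X" and gX: "\<And>x. x \<in> X \<Longrightarrow> g x \<in> X"
    and gf: "\<And>x. x \<in> X \<Longrightarrow> g (f x) = x" and fg: "\<And>x. x \<in> X \<Longrightarrow> f (g x) = x"
    and cf: "continuous_on X f" and cg: "continuous_on X g"
    using assms(2) unfolding homeomorphism_def by auto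
  have uf: "uniformly_continuous_on X f" and ug: "uniformly_continuous_on X g"
    using compact_uniformly_continuous assms(1) cf cg by auto
  have fiX: "\<And>x n. x \<in> X \<Longrightarrow> (f^^n) x \<in> X" using iter_in fX by metis
  have giX: "\<And>x n. x \<in> X \<Longrightarrow> (g^^n) x \<in> X" using iter_in gX by metis
  have fgi: "\<And>x n. x \<in> X \<Longrightarrow> f ((g^^Suc n) x) = (g^^n) x" using fg giX by simp
  show ?thesis
  proof
    assume T: "two_sided_limit_shadowing X f g"
    show "limit_shadowing X f \<and> limit_shadowing X g \<and>
          (\<forall>x\<in>X. \<forall>y\<in>X. unstable_set X g x \<inter> stable_set X f y \<noteq> {})"
    proof (intro conjI ballI)
      show "limit_shadowing X f" unfolding limit_shadowing_def
      proof (intro allI impI)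
        fix x :: "nat \<Rightarrow> 'a" assume xX: "range x \<subseteq> X"
          and hx: "(\<lambda>k. dist (f (x k)) (x (Suc k))) \<longlonglongrightarrow> 0"
        define z where "z k = (if k \<ge> 0 then x (nat k) else (g^^nat(-k)) (x 0))" for k
        have zX: "range z \<subseteq> X" using xX giX by (auto simp: z_def)
        have "(\<lambda>n. dist (f (z (int n))) (z (int n + 1))) = (\<lambda>k. dist (f (x k)) (x (Suc k)))"
          by (auto simp: z_def nat_add_distrib)
        hence t: "((\<lambda>k. dist (f (z k)) (z (k + 1))) \<longlongrightarrow> 0) at_top" using hx L_top by simp
        have "\<forall>k\<le>-1. dist (f (z k)) (z (k + 1)) = 0"
        proof (intro allI impI)
          fix k :: int assume "k \<le> -1"
          then have "k = - int (Suc (nat (-k-1)))" by simp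
          then obtain m where m: "k = - int (Suc m)" by blast
          have "x 0 \<in> X" using xX by auto
          have nn: "nat (int m + 1) = Suc m" by simp
          have "z k = (g^^Suc m) (x 0)" using m by (simp add: z_def nat_int_p1 del: funpow.simps)
          moreover have "k + 1 = - int m" using m by simp
          moreover have "z (- int m) = (g^^m) (x 0)" by (cases m) (auto simp: z_def nat_int_p1)
          ultimately show "dist (f (z k)) (z (k + 1)) = 0" using fgi[of "x 0" m] \<open>x 0 \<in> X\<close> by simp
        qed
        hence b: "((\<lambda>k. dist (f (z k)) (z (k + 1))) \<longlongrightarrow> 0) at_bot"
          by (intro tendsto_eventually) (auto simp: eventually_at_bot_linorder)
        obtain y where "y \<in> X" and "((\<lambda>k. dist (zpow_iter f g k y) (z k)) \<longlongrightarrow> 0) at_top"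
          using T zX t b unfolding two_sided_limit_shadowing_def by blast
        hence "(\<lambda>k. dist ((f ^^ k) y) (x k)) \<longlonglongrightarrow> 0" using L_top by (simp add: z_def)
        thus "\<exists>y\<in>X. (\<lambda>k. dist ((f ^^ k) y) (x k)) \<longlonglongrightarrow> 0" using \<open>y \<in> X\<close> by blast
      qed
    next
      show "limit_shadowing X g" unfolding limit_shadowing_def
      proof (intro allI impI)
        fix x :: "nat \<Rightarrow> 'a" assume xX: "range x \<subseteq> X"
          and hx: "(\<lambda>k. dist (g (x k)) (x (Suc k))) \<longlonglongrightarrow> 0"
        define z where "z k = (if k \<le> 0 then x (nat (-k)) else (f^^nat k) (x 0))" for k
        have zX: "range z \<subseteq> X" using xX fiX by (auto simp: z_def)
        have "\<forall>k\<ge>0. dist (f (z k)) (z (k + 1)) = 0"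
        proof (intro allI impI)
          fix k :: int assume "k \<ge> 0"
          then obtain m where m: "k = int m" using nonneg_int_cases by blast
          thus "dist (f (z k)) (z (k + 1)) = 0"
            by (cases m) (auto simp: z_def nat_add_distrib)
        qed
        hence t: "((\<lambda>k. dist (f (z k)) (z (k + 1))) \<longlongrightarrow> 0) at_top"
          by (intro tendsto_eventually) (auto simp: eventually_at_top_linorder)
        have a1: "\<forall>n. g (x n) \<in> X" using xX gX by auto
        have a2: "\<forall>n. x (Suc n) \<in> X" using xX by auto
        have "(\<lambda>m. dist (f (g (x m))) (f (x (Suc m)))) \<longlonglongrightarrow> 0"
          using uf[unfolded uniformly_continuous_on_sequentially, rule_format, OF conjI[OF a1 conjI[OF a2 hx]]] .
        hence "(\<lambda>m. dist (f (x (Suc m))) (x m)) \<longlonglongrightarrow> 0"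
          using fg xX by (simp add: dist_commute range_subsetD)
        moreover have "(\<lambda>m. dist (f (z (- int (Suc m)))) (z (- int (Suc m) + 1))) = (\<lambda>m. dist (f (x (Suc m))) (x m))"
          by (auto simp: z_def nat_int_p1)
        ultimately have "(\<lambda>n. dist (f (z (- int n))) (z (- int n + 1))) \<longlonglongrightarrow> 0"
          using filterlim_sequentially_Suc[of "\<lambda>n. dist (f (z (- int n))) (z (- int n + 1))"] by simp
        hence b: "((\<lambda>k. dist (f (z k)) (z (k + 1))) \<longlongrightarrow> 0) at_bot" using L_bot by simp
        obtain y where "y \<in> X" and "((\<lambda>k. dist (zpow_iter f g k y) (z k)) \<longlongrightarrow> 0) at_bot"
          using T zX t b unfolding two_sided_limit_shadowing_def by blast
        hence "(\<lambda>k. dist ((g ^^ k) y) (x k)) \<longlonglongrightarrow> 0" using L_bot by (simp add: z_def)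
        thus "\<exists>y\<in>X. (\<lambda>k. dist ((g ^^ k) y) (x k)) \<longlonglongrightarrow> 0" using \<open>y \<in> X\<close> by blast
      qed
    next
      fix x y assume xX: "x \<in> X" and yX: "y \<in> X"
      define z where "z k = (if k < 0 then (g^^nat(-k)) x else (f^^nat k) y)" for k
      have zX: "range z \<subseteq> X" using xX yX fiX giX by (auto simp: z_def)
      have "\<forall>k\<ge>0. dist (f (z k)) (z (k + 1)) = 0"
      proof (intro allI impI)
        fix k :: int assume "k \<ge> 0"
        then obtain m where m: "k = int m" using nonneg_int_cases by blast
        thus "dist (f (z k)) (z (k + 1)) = 0"
          by (auto simp: z_def nat_add_distrib)
      qed
      hence t: "((\<lambda>k. dist (f (z k)) (z (k + 1))) \<longlongrightarrow> 0) at_top"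
        by (intro tendsto_eventually) (auto simp: eventually_at_top_linorder)
      have "\<forall>k\<le>-2. dist (f (z k)) (z (k + 1)) = 0"
      proof (intro allI impI)
        fix k :: int assume "k \<le> -2"
        then have "k = - int (Suc (Suc (nat (-k-2))))" by simp
        then obtain m where m: "k = - int (Suc (Suc m))" by blast
        thus "dist (f (z k)) (z (k + 1)) = 0" using fgi[OF xX, of "Suc m"]
          by (auto simp: z_def nat_int_p1 nat_int_p2)
      qed
      hence b: "((\<lambda>k. dist (f (z k)) (z (k + 1))) \<longlongrightarrow> 0) at_bot"
        by (intro tendsto_eventually) (auto simp: eventually_at_bot_linorder)
      obtain w where wX: "w \<in> X" and wt: "((\<lambda>k. dist (zpow_iter f g k w) (z k)) \<longlongrightarrow> 0) at_top"
        and wb: "((\<lambda>k. dist (zpow_iter f g k w) (z k)) \<longlongrightarrow> 0) at_bot"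
        using T zX t b unfolding two_sided_limit_shadowing_def by blast
      have "(\<lambda>k. dist ((f ^^ k) w) ((f^^k) y)) \<longlonglongrightarrow> 0" using wt L_top by (simp add: z_def)
      hence "w \<in> stable_set X f y" using wX by (simp add: stable_set_def dist_commute)
      moreover
      have "(\<lambda>k. dist ((g ^^ k) w) (z (- int k))) \<longlonglongrightarrow> 0" using wb L_bot by simp
      hence "(\<lambda>k. dist ((g ^^ Suc k) w) ((g^^Suc k) x)) \<longlonglongrightarrow> 0"
        using LIMSEQ_Suc[of "\<lambda>k. dist ((g ^^ k) w) (z (- int k))"] by (simp add: z_def nat_int_p1 del: funpow.simps)
      hence "(\<lambda>k. dist ((g ^^ k) w) ((g^^k) x)) \<longlonglongrightarrow> 0"
        using filterlim_sequentially_Suc[of "\<lambda>k. dist ((g ^^ k) w) ((g^^k) x)"] by simp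
      hence "w \<in> unstable_set X g x" using wX by (simp add: unstable_set_def dist_commute)
      ultimately show "unstable_set X g x \<inter> stable_set X f y \<noteq> {}" by blast
    qed
  next
    assume "limit_shadowing X f \<and> limit_shadowing X g \<and>
          (\<forall>x\<in>X. \<forall>y\<in>X. unstable_set X g x \<inter> stable_set X f y \<noteq> {})"
    hence Lf: "limit_shadowing X f" and Lg: "limit_shadowing X g"
      and W: "\<And>x y. x \<in> X \<Longrightarrow> y \<in> X \<Longrightarrow> unstable_set X g x \<inter> stable_set X f y \<noteq> {}" by auto
    show "two_sided_limit_shadowing X f g" unfolding two_sided_limit_shadowing_def
    proof (intro allI impI)
      fix x :: "int \<Rightarrow> 'a" assume xX: "range x \<subseteq> X"
        and t: "((\<lambda>k. dist (f (x k)) (x (k + 1))) \<longlongrightarrow> 0) at_top"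
        and b: "((\<lambda>k. dist (f (x k)) (x (k + 1))) \<longlongrightarrow> 0) at_bot"
      have "(\<lambda>n. dist (f (x (int n))) (x (int (Suc n)))) \<longlonglongrightarrow> 0" using t L_top by (simp add: add.commute)
      moreover have "range (\<lambda>n. x (int n)) \<subseteq> X" using xX by auto
      ultimately obtain p where pX: "p \<in> X" and hp: "(\<lambda>k. dist ((f ^^ k) p) (x (int k))) \<longlonglongrightarrow> 0"
        using Lf[unfolded limit_shadowing_def, rule_format, of "\<lambda>n. x (int n)"] by auto
      have "(\<lambda>n. dist (f (x (- int n))) (x (- int n + 1))) \<longlonglongrightarrow> 0" using b L_bot by simp
      hence "(\<lambda>n. dist (f (x (- int (Suc n)))) (x (- int (Suc n) + 1))) \<longlonglongrightarrow> 0"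
        using LIMSEQ_Suc by blast
      hence "(\<lambda>n. dist (f (x (- int (Suc n)))) (x (- int n))) \<longlonglongrightarrow> 0" by simp
      moreover have a1: "\<forall>n. f (x (- int (Suc n))) \<in> X" using xX fX by auto
      moreover have a2: "\<forall>n. x (- int n) \<in> X" using xX by auto
      ultimately have "(\<lambda>n. dist (g (f (x (- int (Suc n))))) (g (x (- int n)))) \<longlonglongrightarrow> 0"
        using ug[unfolded uniformly_continuous_on_sequentially, rule_format, of "\<lambda>n. f (x (- int (Suc n)))" "\<lambda>n. x (- int n)"] by blast
      hence "(\<lambda>n. dist (g (x (- int n))) (x (- int (Suc n)))) \<longlonglongrightarrow> 0"
        using gf xX by (simp add: dist_commute range_subsetD)
      moreover have "range (\<lambda>n. x (- int n)) \<subseteq> X" using xX by auto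
      ultimately obtain q where qX: "q \<in> X" and hq: "(\<lambda>k. dist ((g ^^ k) q) (x (- int k))) \<longlonglongrightarrow> 0"
        using Lg[unfolded limit_shadowing_def, rule_format, of "\<lambda>n. x (- int n)"] by auto
      obtain w where wu: "w \<in> unstable_set X g q" and ws: "w \<in> stable_set X f p" using W[OF qX pX] by blast
      have wX: "w \<in> X" using ws by (simp add: stable_set_def)
      have "(\<lambda>k. dist ((f ^^ k) w) ((f^^k) p)) \<longlonglongrightarrow> 0" using ws by (simp add: stable_set_def dist_commute)
      hence "(\<lambda>k. dist ((f ^^ k) w) (x (int k))) \<longlonglongrightarrow> 0" using hp by (rule dist_tri_tendsto)
      hence r1: "((\<lambda>k. dist (zpow_iter f g k w) (x k)) \<longlongrightarrow> 0) at_top" using L_top by simp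
      have "(\<lambda>k. dist ((g ^^ k) w) ((g^^k) q)) \<longlonglongrightarrow> 0" using wu by (simp add: unstable_set_def dist_commute)
      hence "(\<lambda>k. dist ((g ^^ k) w) (x (- int k))) \<longlonglongrightarrow> 0" using hq by (rule dist_tri_tendsto)
      hence r2: "((\<lambda>k. dist (zpow_iter f g k w) (x k)) \<longlongrightarrow> 0) at_bot" using L_bot by simp
      show "\<exists>y\<in>X. ((\<lambda>k. dist (zpow_iter f g k y) (x k)) \<longlongrightarrow> 0) at_top \<and>
               ((\<lambda>k. dist (zpow_iter f g k y) (x k)) \<longlongrightarrow> 0) at_bot"
        using wX r1 r2 by blast
    qed
  qed
qed

end
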